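(* For every $\epsilon>0$ there exists $n_0\in\mathbb N$ such that the following holds for all $n>n_0$. Let $0<\alpha<1$ and suppose $\sigma\in S_n$ has no fixed points and has at most $n^{\alpha}$ cycles of length at most $\lceil 2/\epsilon\rceil$. Then $E(\sigma)\le\alpha/2+\epsilon/2$.
   Context: For $\sigma\in S_n$ let $f_\sigma(i)$ be the number of $i$-cycles of $\sigma$ (fixed points are $1$-cycles). Define $e_1,\dots,e_n$ by $e_1+\cdots+e_k=\max\left(\frac{\log\left(\sum_{i=1}^k i f_\sigma(i)\right)}{\log n},0\right)$ for $1\le k\le n$ (with $\log 0=-\infty$), and set $E(\sigma)=\sum_{i=1}^n e_i/i$. *)

theory Defs
  imports Complex_Main "HOL-Combinatorics.Combinatorics"
begin

text \<open>Permutations in S_n are functions sigma with sigma permutes {1..n}.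
  The cycles of sigma are its orbits on {1..n}; an i-cycle is an orbit of size i.\<close>

definition cycles_of :: "nat \<Rightarrow> (nat \<Rightarrow> nat) \<Rightarrow> nat set set" where
  "cycles_of n \<sigma> = (\<lambda>x. orbit \<sigma> x) ` {1..n}"

definition fcyc :: "nat \<Rightarrow> (nat \<Rightarrow> nat) \<Rightarrow> nat \<Rightarrow> nat" where
  "fcyc n \<sigma> i = card {C \<in> cycles_of n \<sigma>. card C = i}"

text \<open>Partial sums e_1 + ... + e_k = max(log(sum_{i<=k} i f(i)) / log n, 0), with log 0 = -infinity
  (so the value is 0 when the inner sum is 0). For k = 0 the sum is empty, giving 0.\<close>
definition Epart :: "nat \<Rightarrow> (nat \<Rightarrow> nat) \<Rightarrow> nat \<Rightarrow> real" where
  "Epart n \<sigma> k = (let s = (\<Sum>i=1..k. i * fcyc n \<sigma> i) in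
      if s = 0 then 0 else max (ln (real s) / ln (real n)) 0)"

definition ecoef :: "nat \<Rightarrow> (nat \<Rightarrow> nat) \<Rightarrow> nat \<Rightarrow> real" where
  "ecoef n \<sigma> k = Epart n \<sigma> k - Epart n \<sigma> (k - 1)"

definition Eval :: "nat \<Rightarrow> (nat \<Rightarrow> nat) \<Rightarrow> real" where
  "Eval n \<sigma> = (\<Sum>i=1..n. ecoef n \<sigma> i / real i)"

end

theory Submission imports Defs begin

definition Ssum :: "nat \<Rightarrow> (nat \<Rightarrow> nat) \<Rightarrow> nat \<Rightarrow> nat" where
  "Ssum n \<sigma> k = (\<Sum>i=1..k. i * fcyc n \<sigma> i)"

lemma Ssum_mono: "k \<le> k' \<Longrightarrow> Ssum n \<sigma> k \<le> Ssum n \<sigma> k'"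
  unfolding Ssum_def by (rule sum_mono2) auto

lemma orbit_same:
  fixes n :: nat and \<sigma> :: "nat \<Rightarrow> nat"
  assumes "\<sigma> permutes {1..n}" "z \<in> orbit \<sigma> x"
  shows "orbit \<sigma> z = orbit \<sigma> x"
proof -
  have "permutation \<sigma>" by (rule permutes_imp_permutation[OF _ assms(1)]) simp
  show ?thesis by (rule orbit_cyclic_eq3[OF cyclic_on_orbit'[OF \<open>permutation \<sigma>\<close>] assms(2)])
qed

lemma Ssum_le:
  assumes "\<sigma> permutes {1..n}"
  shows "Ssum n \<sigma> k \<le> n"
proof -
  define T where "T = {C \<in> cycles_of n \<sigma>. card C \<in> {1..k}}"
  have finc: "finite (cycles_of n \<sigma>)" unfolding cycles_of_def by simp
  have finT: "finite T" unfolding T_def using finc by simp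
  have sub: "\<And>C. C \<in> cycles_of n \<sigma> \<Longrightarrow> C \<subseteq> {1..n}"
    unfolding cycles_of_def using permutes_orbit_subset[OF assms] by blast
  have finC: "\<And>C. C \<in> T \<Longrightarrow> finite C" unfolding T_def using sub finite_subset by blast
  have "Ssum n \<sigma> k = (\<Sum>i=1..k. \<Sum>C\<in>{C \<in> cycles_of n \<sigma>. card C = i}. card C)"
    unfolding Ssum_def fcyc_def by (intro sum.cong) auto
  also have "\<dots> = (\<Sum>i=1..k. \<Sum>C\<in>{C. C \<in> T \<and> card C = i}. card C)"
    unfolding T_def by (intro sum.cong) auto
  also have "\<dots> = (\<Sum>C\<in>T. card C)"
    by (rule sum.group) (use finT in \<open>auto simp: T_def\<close>)
  also have "\<dots> = card (\<Union>T)"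
  proof (rule card_Union_disjoint[symmetric])
    show "pairwise disjnt T"
      unfolding pairwise_def disjnt_def T_def cycles_of_def
      using orbit_same[OF assms] by blast
  qed (rule finC)
  also have "\<dots> \<le> card {1..n}"
    by (rule card_mono) (use sub in \<open>auto simp: T_def\<close>)
  finally show ?thesis by simp
qed

lemma fcyc1:
  assumes p: "\<sigma> permutes {1..n}" and "\<forall>x\<in>{1..n}. \<sigma> x \<noteq> x"
  shows "fcyc n \<sigma> 1 = 0"
proof -
  have e: "{C \<in> cycles_of n \<sigma>. card C = 1} = {}"
  proof safe
    fix C assume "C \<in> cycles_of n \<sigma>" "card C = 1"
    then obtain x where x: "x \<in> {1..n}" "C = orbit \<sigma> x" unfolding cycles_of_def by auto
    then obtain y where "orbit \<sigma> x = {y}" using \<open>card C = 1\<close> card_1_singletonE by metis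
    moreover have "\<sigma> x \<in> orbit \<sigma> x" "\<sigma> (\<sigma> x) \<in> orbit \<sigma> x" by (auto intro: orbit.intros)
    ultimately have "\<sigma> (\<sigma> x) = \<sigma> x" by auto
    hence "\<sigma> x = x" using permutes_inj[OF p] by (meson injD)
    thus "C \<in> {}" using assms(2) x by auto
  qed
  show ?thesis unfolding fcyc_def e by simp
qed

lemma Epart_alt: "Epart n \<sigma> k = (if Ssum n \<sigma> k = 0 then 0 else max (ln (real (Ssum n \<sigma> k)) / ln (real n)) 0)"
  unfolding Epart_def Ssum_def Let_def by simp

lemma Epart_nonneg: "Epart n \<sigma> k \<ge> 0"
  unfolding Epart_alt by auto

lemma Epart_mono:
  assumes "k \<le> k'" "n \<ge> 2"
  shows "Epart n \<sigma> k \<le> Epart n \<sigma> k'"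
proof (cases "Ssum n \<sigma> k = 0")
  case True thus ?thesis using Epart_nonneg[of n \<sigma> k'] by (simp add: Epart_alt)
next
  case False
  have le: "Ssum n \<sigma> k \<le> Ssum n \<sigma> k'" using Ssum_mono[OF assms(1)] .
  hence "Ssum n \<sigma> k' \<noteq> 0" using False by auto
  moreover have "ln (real (Ssum n \<sigma> k)) \<le> ln (real (Ssum n \<sigma> k'))"
    using le False by simp
  moreover have "ln (real n) > 0" using assms by simp
  ultimately show ?thesis using False
    by (auto simp: Epart_alt intro!: divide_right_mono max.mono)
qed

lemma Epart_le1:
  assumes "\<sigma> permutes {1..n}" "n \<ge> 2"
  shows "Epart n \<sigma> k \<le> 1"
proof (cases "Ssum n \<sigma> k = 0")
  case True thus ?thesis by (simp add: Epart_alt)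
next
  case False
  have "ln (real (Ssum n \<sigma> k)) \<le> ln (real n)"
    using Ssum_le[OF assms(1), of k] False by simp
  moreover have "ln (real n) > 0" using assms by simp
  ultimately show ?thesis using False by (simp add: Epart_alt)
qed

lemma tele:
  fixes f :: "nat \<Rightarrow> real"
  assumes "a \<le> b"
  shows "(\<Sum>i=Suc a..b. f i - f (i-1)) = f b - f a"
  using assms
proof (induction b rule: dec_induct)
  case base then show ?case by simp
next
  case (step m)
  have "(\<Sum>i=Suc a..Suc m. f i - f (i-1)) = (\<Sum>i=Suc a..m. f i - f (i-1)) + (f (Suc m) - f m)"
    using step(1) by (simp add: atLeastAtMostSuc_conv)
  then show ?case using step by simp
qed

lemma alg_aux:
  fixes a b x :: real
  assumes "x > 0"
  shows "(a + (b - 2 / x)) / 2 + 1 / x = a / 2 + b / 2"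
  using assms by (simp add: field_simps)

theorem lemma2p7:
  fixes \<epsilon> :: real
  assumes "\<epsilon> > 0"
  shows "\<exists>n0::nat. \<forall>n > n0. \<forall>(\<alpha>::real) (\<sigma>::nat \<Rightarrow> nat).
           0 < \<alpha> \<and> \<alpha> < 1 \<and> \<sigma> permutes {1..n} \<and> (\<forall>x\<in>{1..n}. \<sigma> x \<noteq> x) \<and>
           real (\<Sum>i=1..nat \<lceil>2 / \<epsilon>\<rceil>. fcyc n \<sigma> i) \<le> real n powr \<alpha>
           \<longrightarrow> Eval n \<sigma> \<le> \<alpha> / 2 + \<epsilon> / 2"
proof -
  define K where "K = nat \<lceil>2 / \<epsilon>\<rceil>"
  have K2: "real K \<ge> 2 / \<epsilon>" unfolding K_def by linarith
  have K0: "real K > 0" using K2 assms by (smt (verit) divide_pos_pos)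
  hence K1: "K \<ge> 1" by simp
  have "2 / (real K + 1) < \<epsilon>"
  proof -
    have "2 < \<epsilon> * (real K + 1)" using K2 assms by (simp add: field_simps)
    thus ?thesis using assms by (simp add: field_simps)
  qed
  define c where "c = \<epsilon> - 2 / (real K + 1)"
  have c0: "c > 0" unfolding c_def using \<open>2 / (real K + 1) < \<epsilon>\<close> by simp
  define n0 where "n0 = max K (nat \<lceil>exp (ln (real K) / c)\<rceil>) + 2"
  show ?thesis unfolding K_def[symmetric]
  proof (intro exI[of _ n0] allI impI, elim conjE)
    fix n :: nat and \<alpha> :: real and \<sigma> :: "nat \<Rightarrow> nat"
    assume n: "n > n0" and a0: "0 < \<alpha>" and a1: "\<alpha> < 1" and p: "\<sigma> permutes {1..n}"
      and nf: "\<forall>x\<in>{1..n}. \<sigma> x \<noteq> x"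
      and h: "real (\<Sum>i=1..K. fcyc n \<sigma> i) \<le> real n powr \<alpha>"
    have n2: "n \<ge> 2" and nK: "K < n" using n unfolding n0_def by auto
    have "real n \<ge> exp (ln (real K) / c)" using n unfolding n0_def by linarith
    hence "ln (exp (ln (real K) / c)) \<le> ln (real n)"
      using n2 by (subst ln_le_cancel_iff) auto
    hence Ln: "ln (real n) \<ge> ln (real K) / c" by simp
    have Lpos: "ln (real n) > 0" using n2 by simp
    have lnK0: "ln (real K) \<ge> 0" using K1 by simp
    have delta: "ln (real K) / ln (real n) \<le> c"
      using Ln Lpos c0 by (simp add: divide_le_eq mult.commute pos_divide_le_eq)
    define E where "E = Epart n \<sigma>"
    have E0: "E 0 = 0" unfolding E_def Epart_def by simp
    have E1: "E 1 = 0" unfolding E_def Epart_def using fcyc1[OF p nf] by simp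
    have Emono: "\<And>k k'. k \<le> k' \<Longrightarrow> E k \<le> E k'" unfolding E_def using Epart_mono n2 by blast
    have Ele1: "\<And>k. E k \<le> 1" unfolding E_def using Epart_le1[OF p n2] .
    have Enn: "\<And>k. E k \<ge> 0" unfolding E_def using Epart_nonneg .
    have SK: "real (Ssum n \<sigma> K) \<le> real K * real n powr \<alpha>"
    proof -
      have "Ssum n \<sigma> K \<le> (\<Sum>i=1..K. K * fcyc n \<sigma> i)"
        unfolding Ssum_def by (intro sum_mono) auto
      also have "\<dots> = K * (\<Sum>i=1..K. fcyc n \<sigma> i)" by (simp add: sum_distrib_left)
      finally have "real (Ssum n \<sigma> K) \<le> real K * real (\<Sum>i=1..K. fcyc n \<sigma> i)"
        by (metis of_nat_le_iff of_nat_mult)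
      also have "\<dots> \<le> real K * real n powr \<alpha>" using h by (simp add: mult_left_mono)
      finally show ?thesis .
    qed
    have EK: "E K \<le> \<alpha> + c"
    proof (cases "Ssum n \<sigma> K = 0")
      case True thus ?thesis using a0 c0 by (simp add: E_def Epart_alt)
    next
      case False
      have "ln (real (Ssum n \<sigma> K)) \<le> ln (real K * real n powr \<alpha>)"
        using SK False by simp
      also have "\<dots> = ln (real K) + \<alpha> * ln (real n)"
        using K1 n2 by (simp add: ln_mult ln_powr)
      finally have "ln (real (Ssum n \<sigma> K)) / ln (real n) \<le> (ln (real K) + \<alpha> * ln (real n)) / ln (real n)"
        using Lpos by (intro divide_right_mono) auto
      also have "\<dots> = ln (real K) / ln (real n) + \<alpha>" using Lpos by (simp add: add_divide_distrib)
      finally have "ln (real (Ssum n \<sigma> K)) / ln (real n) \<le> ln (real K) / ln (real n) + \<alpha>" .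
      hence "ln (real (Ssum n \<sigma> K)) / ln (real n) \<le> \<alpha> + c" using delta by linarith
      thus ?thesis using False a0 c0 by (simp add: E_def Epart_alt)
    qed
    define e where "e = (\<lambda>i. E i - E (i - 1))"
    have eq: "Eval n \<sigma> = (\<Sum>i=1..n. e i / real i)"
      unfolding Eval_def e_def E_def ecoef_def ..
    have enn: "\<And>i. e i \<ge> 0" unfolding e_def using Emono by simp
    have split: "(\<Sum>i=1..n. e i / real i) = (\<Sum>i=1..K. e i / real i) + (\<Sum>i=Suc K..n. e i / real i)"
    proof -
      have nn: "K + (n - K) = n" using nK by simp
      have "(\<Sum>i=1..K + (n-K). e i / real i) = (\<Sum>i=1..K. e i / real i) + (\<Sum>i=K+1..K + (n-K). e i / real i)"
        by (rule sum.ub_add_nat) simp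
      then have "(\<Sum>i=1..n. e i / real i) = (\<Sum>i=1..K. e i / real i) + (\<Sum>i=K+1..n. e i / real i)"
        unfolding nn .
      then show ?thesis by simp
    qed
    have A: "(\<Sum>i=1..K. e i / real i) \<le> (\<Sum>i=1..K. e i / 2)"
    proof (rule sum_mono)
      fix i assume "i \<in> {1..K}"
      show "e i / real i \<le> e i / 2"
      proof (cases "i = 1")
        case True thus ?thesis using E0 E1 by (simp add: e_def)
      next
        case False hence "real i \<ge> 2" using \<open>i \<in> {1..K}\<close> by auto
        thus ?thesis using enn[of i] by (intro divide_left_mono) auto
      qed
    qed
    have A2: "(\<Sum>i=1..K. e i / 2) = E K / 2"
      using tele[of 0 K E] E0 unfolding e_def by (simp add: sum_divide_distrib[symmetric])
    have B: "(\<Sum>i=Suc K..n. e i / real i) \<le> (\<Sum>i=Suc K..n. e i / (real K + 1))"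
    proof (rule sum_mono)
      fix i assume "i \<in> {Suc K..n}"
      hence "real i \<ge> real K + 1" by auto
      thus "e i / real i \<le> e i / (real K + 1)" using enn[of i] by (intro divide_left_mono) auto
    qed
    have B2: "(\<Sum>i=Suc K..n. e i / (real K + 1)) = (E n - E K) / (real K + 1)"
      using tele[of K n E] nK unfolding e_def by (simp add: sum_divide_distrib[symmetric])
    have "(E n - E K) / (real K + 1) \<le> 1 / (real K + 1)"
      using Ele1[of n] Enn[of K] by (simp add: divide_right_mono)
    have "Eval n \<sigma> \<le> E K / 2 + (E n - E K) / (real K + 1)"
      using eq split A A2 B B2 by linarith
    also have "\<dots> \<le> (\<alpha> + c) / 2 + 1 / (real K + 1)"
      using EK \<open>(E n - E K) / (real K + 1) \<le> 1 / (real K + 1)\<close> by (intro add_mono) auto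
    finally have "Eval n \<sigma> \<le> (\<alpha> + c) / 2 + 1 / (real K + 1)" .
    also have "\<dots> = \<alpha> / 2 + \<epsilon> / 2" unfolding c_def by (rule alg_aux) (use K0 in simp)
    finally show "Eval n \<sigma> \<le> \<alpha> / 2 + \<epsilon> / 2" .
  qed
qed

end
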